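(* Let $\mathfrak{A}$ and $\mathfrak{B}$ be weakly Connes amenable dual Banach algebras such that $\mathfrak{A}^2$ is $w^*$-dense in $\mathfrak{A}$ and $\mathfrak{B}^2$ is $w^*$-dense in $\mathfrak{B}$. Then the $\ell^1$-direct sum $\mathfrak{A}\oplus^1\mathfrak{B}$ is weakly Connes amenable.
   Context: A dual Banach algebra is a Banach algebra $\mathfrak{A}$ which is the dual of a Banach space $\mathfrak{A}_*$ and whose multiplication is separately $w^*$-continuous. $\mathfrak{A}^2$ denotes the linear span of the products $ab$, $a,b\in\mathfrak{A}$. $\mathfrak{A}\oplus^1\mathfrak{B}$ has norm $\|(a,b)\|=\|a\|+\|b\|$, coordinatewise operations, and predual $\mathfrak{A}_*\oplus^\infty\mathfrak{B}_*$ (with pairing $\langle(a,b),(\phi,\psi)\rangle=\langle a,\phi\rangle+\langle b,\psi\rangle$), which makes it a dual Banach algebra. A derivation $D:\mathfrak{C}\to F$ is a continuous linear map with $D(xy)=D(x)\cdot y+x\cdot D(y)$; inner if $D(x)=x\cdot f-f\cdot x$ for some $f\in F$. For a Banach bimodule $E$ over a dual Banach algebra $\mathfrak{C}$, $\sigma wc(E)$ is the set of $x\in E$ such that $c\mapsto c\cdot x$ and $c\mapsto x\cdot c$ are continuous from $(\mathfrak{C},w^* )$ to $(E,\sigma(E,E^* ))$; $j_{\mathfrak{C}}:\mathfrak{C}^*\to\sigma wc(\mathfrak{C})^*$ is the adjoint of the inclusion $\sigma wc(\mathfrak{C})\hookrightarrow\mathfrak{C}$. $\mathfrak{C}$ is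 weakly Connes amenable if for every derivation $D:\mathfrak{C}\to\mathfrak{C}^*$ such that $j_{\mathfrak{C}}\circ D:\mathfrak{C}\to\sigma wc(\mathfrak{C})^*$ is $w^*$-$w^*$ continuous, the derivation $j_{\mathfrak{C}}\circ D$ is inner. *)

theory Defs
  imports "HOL-Analysis.Analysis"
begin

text \<open>Normed spaces over a scalar field 'k (real or complex) are given by an explicit
  scalar multiplication sc and an explicit norm N, so that the l1-norm of a direct sum
  and the sup-norm of its predual can be used literally.\<close>

definition normed_sp :: "('k::real_normed_field \<Rightarrow> 'a::ab_group_add \<Rightarrow> 'a) \<Rightarrow> ('a \<Rightarrow> real) \<Rightarrow> bool" where
  "normed_sp sc N \<longleftrightarrow> vector_space sc \<and> (\<forall>x. 0 \<le> N x) \<and> (\<forall>x. N x = 0 \<longleftrightarrow> x = 0)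
     \<and> (\<forall>x y. N (x + y) \<le> N x + N y) \<and> (\<forall>c x. N (sc c x) = norm c * N x)"

definition complete_sp :: "('a::ab_group_add \<Rightarrow> real) \<Rightarrow> bool" where
  "complete_sp N \<longleftrightarrow> (\<forall>X::nat \<Rightarrow> 'a.
     (\<forall>e>0. \<exists>M. \<forall>m\<ge>M. \<forall>n\<ge>M. N (X m - X n) < e) \<longrightarrow> (\<exists>L. \<forall>e>0. \<exists>M. \<forall>n\<ge>M. N (X n - L) < e))"

definition banach_sp :: "('k::real_normed_field \<Rightarrow> 'a::ab_group_add \<Rightarrow> 'a) \<Rightarrow> ('a \<Rightarrow> real) \<Rightarrow> bool" where
  "banach_sp sc N \<longleftrightarrow> normed_sp sc N \<and> complete_sp N"

definition bdd_functional :: "('k::real_normed_field \<Rightarrow> 'a::ab_group_add \<Rightarrow> 'a) \<Rightarrow> ('a \<Rightarrow> real) \<Rightarrow> ('a \<Rightarrow> 'k) \<Rightarrow> bool" where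
  "bdd_functional sc N f \<longleftrightarrow> (\<forall>x y. f (x + y) = f x + f y) \<and> (\<forall>c x. f (sc c x) = c * f x)
     \<and> (\<exists>K. \<forall>x. norm (f x) \<le> K * N x)"

definition is_dual_of :: "('k::real_normed_field \<Rightarrow> 'a::ab_group_add \<Rightarrow> 'a) \<Rightarrow> ('a \<Rightarrow> real)
    \<Rightarrow> ('k \<Rightarrow> 'p::ab_group_add \<Rightarrow> 'p) \<Rightarrow> ('p \<Rightarrow> real) \<Rightarrow> ('a \<Rightarrow> 'p \<Rightarrow> 'k) \<Rightarrow> bool" where
  "is_dual_of sc N scp Np P \<longleftrightarrow>
     (\<forall>a. bdd_functional scp Np (P a))
   \<and> (\<forall>a b \<phi>. P (a + b) \<phi> = P a \<phi> + P b \<phi>) \<and> (\<forall>c a \<phi>. P (sc c a) \<phi> = c * P a \<phi>)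
   \<and> (\<forall>a. N a = (SUP \<phi>\<in>{\<phi>. Np \<phi> \<le> 1}. norm (P a \<phi>)))
   \<and> (\<forall>f. bdd_functional scp Np f \<longrightarrow> (\<exists>a. P a = f))"

definition wstar_top :: "('a \<Rightarrow> 'p \<Rightarrow> 'k::real_normed_field) \<Rightarrow> 'a topology" where
  "wstar_top P = topology_generated_by {{a. P a \<phi> \<in> U} | \<phi> U. open U}"

definition weak_top :: "('k::real_normed_field \<Rightarrow> 'a::ab_group_add \<Rightarrow> 'a) \<Rightarrow> ('a \<Rightarrow> real) \<Rightarrow> 'a topology" where
  "weak_top sc N = topology_generated_by {{a. f a \<in> U} | f U. bdd_functional sc N f \<and> open U}"

definition dual_banach_algebra ::
  "('k::real_normed_field \<Rightarrow> 'a::ab_group_add \<Rightarrow> 'a) \<Rightarrow> ('a \<Rightarrow> real) \<Rightarrow> ('a \<Rightarrow> 'a \<Rightarrow> 'a)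
    \<Rightarrow> ('k \<Rightarrow> 'p::ab_group_add \<Rightarrow> 'p) \<Rightarrow> ('p \<Rightarrow> real) \<Rightarrow> ('a \<Rightarrow> 'p \<Rightarrow> 'k) \<Rightarrow> bool" where
  "dual_banach_algebra sc N mul scp Np P \<longleftrightarrow>
     banach_sp sc N
   \<and> (\<forall>x y z. mul (mul x y) z = mul x (mul y z))
   \<and> (\<forall>x y z. mul (x + y) z = mul x z + mul y z) \<and> (\<forall>x y z. mul x (y + z) = mul x y + mul x z)
   \<and> (\<forall>c x y. mul (sc c x) y = sc c (mul x y)) \<and> (\<forall>c x y. mul x (sc c y) = sc c (mul x y))
   \<and> (\<forall>x y. N (mul x y) \<le> N x * N y)
   \<and> banach_sp scp Np \<and> is_dual_of sc N scp Np P
   \<and> (\<forall>a. continuous_map (wstar_top P) (wstar_top P) (\<lambda>x. mul a x))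
   \<and> (\<forall>a. continuous_map (wstar_top P) (wstar_top P) (\<lambda>x. mul x a))"

definition sigma_wc :: "('k::real_normed_field \<Rightarrow> 'a::ab_group_add \<Rightarrow> 'a) \<Rightarrow> ('a \<Rightarrow> real) \<Rightarrow> ('a \<Rightarrow> 'a \<Rightarrow> 'a)
    \<Rightarrow> ('a \<Rightarrow> 'p \<Rightarrow> 'k) \<Rightarrow> 'a set" where
  "sigma_wc sc N mul P = {x. continuous_map (wstar_top P) (weak_top sc N) (\<lambda>c. mul c x)
                            \<and> continuous_map (wstar_top P) (weak_top sc N) (\<lambda>c. mul x c)}"

text \<open>Derivations D : C \<rightarrow> C*, where (a\<cdot>f)(b) = f(b a) and (f\<cdot>a)(b) = f(a b);
  D x is the functional D x (applied to z as D x z).\<close>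
definition dual_derivation :: "('k::real_normed_field \<Rightarrow> 'a::ab_group_add \<Rightarrow> 'a) \<Rightarrow> ('a \<Rightarrow> real) \<Rightarrow> ('a \<Rightarrow> 'a \<Rightarrow> 'a)
    \<Rightarrow> ('a \<Rightarrow> 'a \<Rightarrow> 'k) \<Rightarrow> bool" where
  "dual_derivation sc N mul D \<longleftrightarrow>
     (\<forall>x. bdd_functional sc N (D x))
   \<and> (\<forall>x y z. D (x + y) z = D x z + D y z) \<and> (\<forall>c x z. D (sc c x) z = c * D x z)
   \<and> (\<exists>K. \<forall>x z. norm (D x z) \<le> K * N x * N z)
   \<and> (\<forall>x y z. D (mul x y) z = D x (mul y z) + D y (mul z x))"

definition weakly_connes_amenable ::
  "('k::real_normed_field \<Rightarrow> 'a::ab_group_add \<Rightarrow> 'a) \<Rightarrow> ('a \<Rightarrow> real) \<Rightarrow> ('a \<Rightarrow> 'a \<Rightarrow> 'a)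
    \<Rightarrow> ('a \<Rightarrow> 'p \<Rightarrow> 'k) \<Rightarrow> bool" where
  "weakly_connes_amenable sc N mul P \<longleftrightarrow>
     (\<forall>D. dual_derivation sc N mul D
        \<and> (\<forall>y\<in>sigma_wc sc N mul P. continuous_map (wstar_top P) euclidean (\<lambda>c. D c y))
      \<longrightarrow> (\<exists>f. (\<forall>x\<in>sigma_wc sc N mul P. \<forall>y\<in>sigma_wc sc N mul P. f (x + y) = f x + f y)
             \<and> (\<forall>c. \<forall>x\<in>sigma_wc sc N mul P. f (sc c x) = c * f x)
             \<and> (\<exists>K. \<forall>x\<in>sigma_wc sc N mul P. norm (f x) \<le> K * N x)
             \<and> (\<forall>c. \<forall>y\<in>sigma_wc sc N mul P. D c y = f (mul y c) - f (mul c y))))"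

definition sq_wstar_dense :: "('k::real_normed_field \<Rightarrow> 'a::ab_group_add \<Rightarrow> 'a) \<Rightarrow> ('a \<Rightarrow> 'a \<Rightarrow> 'a)
    \<Rightarrow> ('a \<Rightarrow> 'p \<Rightarrow> 'k) \<Rightarrow> bool" where
  "sq_wstar_dense sc mul P \<longleftrightarrow> (wstar_top P) closure_of (module.span sc {mul a b | a b. True}) = UNIV"

definition sum_sc :: "('k \<Rightarrow> 'a \<Rightarrow> 'a) \<Rightarrow> ('k \<Rightarrow> 'b \<Rightarrow> 'b) \<Rightarrow> 'k \<Rightarrow> 'a \<times> 'b \<Rightarrow> 'a \<times> 'b" where
  "sum_sc sa sb c x = (sa c (fst x), sb c (snd x))"
definition l1_norm :: "('a \<Rightarrow> real) \<Rightarrow> ('b \<Rightarrow> real) \<Rightarrow> 'a \<times> 'b \<Rightarrow> real" where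
  "l1_norm Na Nb x = Na (fst x) + Nb (snd x)"
definition linf_norm :: "('a \<Rightarrow> real) \<Rightarrow> ('b \<Rightarrow> real) \<Rightarrow> 'a \<times> 'b \<Rightarrow> real" where
  "linf_norm Na Nb x = max (Na (fst x)) (Nb (snd x))"
definition sum_mul :: "('a \<Rightarrow> 'a \<Rightarrow> 'a) \<Rightarrow> ('b \<Rightarrow> 'b \<Rightarrow> 'b) \<Rightarrow> 'a \<times> 'b \<Rightarrow> 'a \<times> 'b \<Rightarrow> 'a \<times> 'b" where
  "sum_mul ma mb x y = (ma (fst x) (fst y), mb (snd x) (snd y))"
definition sum_pair :: "('a \<Rightarrow> 'p \<Rightarrow> 'k::plus) \<Rightarrow> ('b \<Rightarrow> 'q \<Rightarrow> 'k) \<Rightarrow> 'a \<times> 'b \<Rightarrow> 'p \<times> 'q \<Rightarrow> 'k" where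
  "sum_pair Pa Pb x \<phi> = Pa (fst x) (fst \<phi>) + Pb (snd x) (snd \<phi>)"

end

theory Submission imports Defs begin

lemma wstar_topspace[simp]: "topspace (wstar_top P) = UNIV"
proof -
  have "UNIV = {a. P a \<phi> \<in> UNIV}" for \<phi> by simp
  then have "UNIV \<in> {{a. P a \<phi> \<in> U} | \<phi> U. open U}" using open_UNIV by blast
  then show ?thesis unfolding wstar_top_def topology_generated_by_topspace by blast
qed

lemma bdd_zero: "bdd_functional sc N (\<lambda>x. 0)"
  unfolding bdd_functional_def by (auto intro: exI[of _ 0])

lemma weak_topspace[simp]: "topspace (weak_top sc N) = UNIV"
proof -
  have "UNIV \<in> {{a. f a \<in> U} | f U. bdd_functional sc N f \<and> open U}"
    apply (rule CollectI)
    apply (rule exI[of _ "\<lambda>x. 0"])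
    apply (rule exI[of _ UNIV])
    apply (simp add: bdd_zero)
    done
  then show ?thesis unfolding weak_top_def topology_generated_by_topspace by blast
qed

lemma openin_wstar: "open U \<Longrightarrow> openin (wstar_top P) {a. P a \<phi> \<in> U}"
  unfolding wstar_top_def by (rule topology_generated_by_Basis) blast

lemma openin_weak: "bdd_functional sc N f \<Longrightarrow> open U \<Longrightarrow> openin (weak_top sc N) {a. f a \<in> U}"
  unfolding weak_top_def by (rule topology_generated_by_Basis) blast

lemma cont_into_wstar:
  assumes "\<And>\<phi> U. open U \<Longrightarrow> openin X {x\<in>topspace X. P (g x) \<phi> \<in> U}"
  shows "continuous_map X (wstar_top P) g"
  unfolding wstar_top_def
proof (rule continuous_on_generated_topo)
  fix V assume "V \<in> {{a. P a \<phi> \<in> U} | \<phi> U. open U}"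
  then obtain \<phi> U where "open U" "V = {a. P a \<phi> \<in> U}" by blast
  moreover have "g -` {a. P a \<phi> \<in> U} \<inter> topspace X = {x\<in>topspace X. P (g x) \<phi> \<in> U}" by auto
  ultimately show "openin X (g -` V \<inter> topspace X)" using assms[of U \<phi>] by simp
next
  show "g ` topspace X \<subseteq> \<Union> {{a. P a \<phi> \<in> U} | \<phi> U. open U}"
    using wstar_topspace[of P] unfolding wstar_top_def topology_generated_by_topspace by simp
qed

lemma cont_into_weak:
  assumes "\<And>f U. bdd_functional sc N f \<Longrightarrow> open U \<Longrightarrow> openin X {x\<in>topspace X. f (g x) \<in> U}"
  shows "continuous_map X (weak_top sc N) g"
  unfolding weak_top_def
proof (rule continuous_on_generated_topo)
  fix V assume "V \<in> {{a. f a \<in> U} | f U. bdd_functional sc N f \<and> open U}"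
  then obtain f U where "bdd_functional sc N f" "open U" "V = {a. f a \<in> U}" by blast
  moreover have "g -` {a. f a \<in> U} \<inter> topspace X = {x\<in>topspace X. f (g x) \<in> U}" by auto
  ultimately show "openin X (g -` V \<inter> topspace X)" using assms[of f U] by simp
next
  show "g ` topspace X \<subseteq> \<Union> {{a. f a \<in> U} | f U. bdd_functional sc N f \<and> open U}"
    using weak_topspace[of sc N] unfolding weak_top_def topology_generated_by_topspace by simp
qed


lemma dba_facts:
  assumes "dual_banach_algebra sc N mul scp Np P"
  shows "vector_space sc" "\<And>c. sc c 0 = 0" "N 0 = 0" "\<And>x. N x \<ge> 0"
    "\<And>x. mul x 0 = 0" "\<And>x. mul 0 x = 0" "\<And>\<phi>. P 0 \<phi> = 0" "\<And>a. P a 0 = 0"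
proof -
  have b: "banach_sp sc N" and m1: "\<forall>x y z. mul (x + y) z = mul x z + mul y z"
    and m2: "\<forall>x y z. mul x (y + z) = mul x y + mul x z"
    and d: "is_dual_of sc N scp Np P"
    using assms unfolding dual_banach_algebra_def by auto
  have ns: "normed_sp sc N" using b unfolding banach_sp_def by auto
  then show vs: "vector_space sc" unfolding normed_sp_def by auto
  then show "\<And>c. sc c 0 = 0" using module.scale_zero_right module_iff_vector_space by metis
  show "N 0 = 0" "\<And>x. N x \<ge> 0" using ns unfolding normed_sp_def by auto
  show "\<And>x. mul x 0 = 0" using m2 by (metis add_cancel_right_right add_0)
  show "\<And>x. mul 0 x = 0" using m1 by (metis add_cancel_right_right add_0)
  have "\<forall>a b \<phi>. P (a + b) \<phi> = P a \<phi> + P b \<phi>" using d unfolding is_dual_of_def by auto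
  then show "\<And>\<phi>. P 0 \<phi> = 0" by (metis add_cancel_right_right add_0)
  have "\<forall>a. bdd_functional scp Np (P a)" using d unfolding is_dual_of_def by auto
  then have "\<And>a x y. P a (x + y) = P a x + P a y" unfolding bdd_functional_def by auto
  then show "\<And>a. P a 0 = 0" by (metis add_cancel_right_right add_0)
qed

lemma incl1_wstar:
  assumes "\<And>\<psi>. PB 0 \<psi> = 0"
  shows "continuous_map (wstar_top PA) (wstar_top (sum_pair PA PB)) (\<lambda>a. (a, 0))"
  by (rule cont_into_wstar) (simp add: sum_pair_def assms openin_wstar)

lemma incl2_wstar:
  assumes "\<And>\<psi>. PA 0 \<psi> = 0"
  shows "continuous_map (wstar_top PB) (wstar_top (sum_pair PA PB)) (\<lambda>b. (0, b))"
  by (rule cont_into_wstar) (simp add: sum_pair_def assms openin_wstar)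

lemma fst_wstar:
  fixes PA :: "'a \<Rightarrow> 'p \<Rightarrow> 'k::real_normed_field" and PB :: "'b \<Rightarrow> 'q::zero \<Rightarrow> 'k"
  assumes "\<And>b. PB b 0 = 0"
  shows "continuous_map (wstar_top (sum_pair PA PB)) (wstar_top PA) fst"
proof (rule cont_into_wstar)
  fix \<phi> and U :: "'k set" assume "open U"
  then have "openin (wstar_top (sum_pair PA PB)) {a. sum_pair PA PB a (\<phi>, 0) \<in> U}" by (rule openin_wstar)
  then show "openin (wstar_top (sum_pair PA PB)) {x \<in> topspace (wstar_top (sum_pair PA PB)). PA (fst x) \<phi> \<in> U}"
    by (simp add: sum_pair_def assms)
qed

lemma snd_wstar:
  fixes PA :: "'a \<Rightarrow> 'p::zero \<Rightarrow> 'k::real_normed_field" and PB :: "'b \<Rightarrow> 'q \<Rightarrow> 'k"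
  assumes "\<And>a. PA a 0 = 0"
  shows "continuous_map (wstar_top (sum_pair PA PB)) (wstar_top PB) snd"
proof (rule cont_into_wstar)
  fix \<phi> and U :: "'k set" assume "open U"
  then have "openin (wstar_top (sum_pair PA PB)) {a. sum_pair PA PB a (0, \<phi>) \<in> U}" by (rule openin_wstar)
  then show "openin (wstar_top (sum_pair PA PB)) {x \<in> topspace (wstar_top (sum_pair PA PB)). PB (snd x) \<phi> \<in> U}"
    by (simp add: sum_pair_def assms)
qed

lemma incl1_weak:
  fixes scA :: "'k::real_normed_field \<Rightarrow> 'a::ab_group_add \<Rightarrow> 'a" and scB :: "'k \<Rightarrow> 'b::ab_group_add \<Rightarrow> 'b"
  assumes "\<And>c. scB c 0 = 0" "NB 0 = 0"
  shows "continuous_map (weak_top scA NA) (weak_top (sum_sc scA scB) (l1_norm NA NB)) (\<lambda>a. (a, 0))"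
proof (rule cont_into_weak)
  fix f and U :: "'k set" assume f: "bdd_functional (sum_sc scA scB) (l1_norm NA NB) f" and U: "open U"
  have "bdd_functional scA NA (\<lambda>a. f (a, 0))"
  proof -
    from f have a: "\<And>x y. f (x + y) = f x + f y" and s: "\<And>c x. f (sum_sc scA scB c x) = c * f x"
      and "\<exists>K. \<forall>x. norm (f x) \<le> K * l1_norm NA NB x" unfolding bdd_functional_def by auto
    then obtain K where K: "\<And>x. norm (f x) \<le> K * l1_norm NA NB x" by auto
    have "f (x + y, 0) = f (x, 0) + f (y, 0)" for x y using a[of "(x,0)" "(y,0)"] by simp
    moreover have "f (scA c x, 0) = c * f (x, 0)" for c x using s[of c "(x,0)"] by (simp add: sum_sc_def assms)
    moreover have "norm (f (x, 0)) \<le> K * NA x" for x using K[of "(x,0)"] by (simp add: l1_norm_def assms)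
    ultimately show ?thesis unfolding bdd_functional_def by blast
  qed
  then show "openin (weak_top scA NA) {x \<in> topspace (weak_top scA NA). f (x, 0) \<in> U}"
    using openin_weak[OF _ U] by simp
qed

lemma incl2_weak:
  fixes scA :: "'k::real_normed_field \<Rightarrow> 'a::ab_group_add \<Rightarrow> 'a" and scB :: "'k \<Rightarrow> 'b::ab_group_add \<Rightarrow> 'b"
  assumes "\<And>c. scA c 0 = 0" "NA 0 = 0"
  shows "continuous_map (weak_top scB NB) (weak_top (sum_sc scA scB) (l1_norm NA NB)) (\<lambda>b. (0, b))"
proof (rule cont_into_weak)
  fix f and U :: "'k set" assume f: "bdd_functional (sum_sc scA scB) (l1_norm NA NB) f" and U: "open U"
  have "bdd_functional scB NB (\<lambda>b. f (0, b))"
  proof -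
    from f have a: "\<And>x y. f (x + y) = f x + f y" and s: "\<And>c x. f (sum_sc scA scB c x) = c * f x"
      and "\<exists>K. \<forall>x. norm (f x) \<le> K * l1_norm NA NB x" unfolding bdd_functional_def by auto
    then obtain K where K: "\<And>x. norm (f x) \<le> K * l1_norm NA NB x" by auto
    have "f (0, x + y) = f (0, x) + f (0, y)" for x y using a[of "(0,x)" "(0,y)"] by simp
    moreover have "f (0, scB c x) = c * f (0, x)" for c x using s[of c "(0,x)"] by (simp add: sum_sc_def assms)
    moreover have "norm (f (0, x)) \<le> K * NB x" for x using K[of "(0,x)"] by (simp add: l1_norm_def assms)
    ultimately show ?thesis unfolding bdd_functional_def by blast
  qed
  then show "openin (weak_top scB NB) {x \<in> topspace (weak_top scB NB). f (0, x) \<in> U}"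
    using openin_weak[OF _ U] by simp
qed

lemma fst_weak:
  fixes scA :: "'k::real_normed_field \<Rightarrow> 'a::ab_group_add \<Rightarrow> 'a" and scB :: "'k \<Rightarrow> 'b::ab_group_add \<Rightarrow> 'b"
  assumes "\<And>y. NB y \<ge> 0" "\<And>y. NA y \<ge> 0"
  shows "continuous_map (weak_top (sum_sc scA scB) (l1_norm NA NB)) (weak_top scA NA) fst"
proof (rule cont_into_weak)
  fix f and U :: "'k set" assume f: "bdd_functional scA NA f" and U: "open U"
  have "bdd_functional (sum_sc scA scB) (l1_norm NA NB) (\<lambda>x. f (fst x))"
  proof -
    from f have a: "\<And>x y. f (x + y) = f x + f y" and s: "\<And>c x. f (scA c x) = c * f x"
      and "\<exists>K. \<forall>x. norm (f x) \<le> K * NA x" unfolding bdd_functional_def by auto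
    then obtain K where K: "\<And>x. norm (f x) \<le> K * NA x" by auto
    have bnd: "norm (f (fst x)) \<le> max K 0 * l1_norm NA NB x" for x
    proof -
      have "norm (f (fst x)) \<le> K * NA (fst x)" by (rule K)
      also have "\<dots> \<le> max K 0 * NA (fst x)" 
        by (intro mult_right_mono) (auto simp: assms)
      also have "\<dots> \<le> max K 0 * l1_norm NA NB x" unfolding l1_norm_def
        by (intro mult_left_mono) (auto simp: assms)
      finally show ?thesis .
    qed
    show ?thesis unfolding bdd_functional_def
      by (intro conjI allI exI[of _ "max K 0"]) (auto simp: sum_sc_def a s bnd)
  qed
  then show "openin (weak_top (sum_sc scA scB) (l1_norm NA NB)) {x \<in> topspace (weak_top (sum_sc scA scB) (l1_norm NA NB)). f (fst x) \<in> U}"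
    using openin_weak[OF _ U] by simp
qed

lemma snd_weak:
  fixes scA :: "'k::real_normed_field \<Rightarrow> 'a::ab_group_add \<Rightarrow> 'a" and scB :: "'k \<Rightarrow> 'b::ab_group_add \<Rightarrow> 'b"
  assumes "\<And>y. NA y \<ge> 0" "\<And>y. NB y \<ge> 0"
  shows "continuous_map (weak_top (sum_sc scA scB) (l1_norm NA NB)) (weak_top scB NB) snd"
proof (rule cont_into_weak)
  fix f and U :: "'k set" assume f: "bdd_functional scB NB f" and U: "open U"
  have "bdd_functional (sum_sc scA scB) (l1_norm NA NB) (\<lambda>x. f (snd x))"
  proof -
    from f have a: "\<And>x y. f (x + y) = f x + f y" and s: "\<And>c x. f (scB c x) = c * f x"
      and "\<exists>K. \<forall>x. norm (f x) \<le> K * NB x" unfolding bdd_functional_def by auto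
    then obtain K where K: "\<And>x. norm (f x) \<le> K * NB x" by auto
    have bnd: "norm (f (snd x)) \<le> max K 0 * l1_norm NA NB x" for x
    proof -
      have "norm (f (snd x)) \<le> K * NB (snd x)" by (rule K)
      also have "\<dots> \<le> max K 0 * NB (snd x)" 
        by (intro mult_right_mono) (auto simp: assms)
      also have "\<dots> \<le> max K 0 * l1_norm NA NB x" unfolding l1_norm_def
        by (intro mult_left_mono) (auto simp: assms)
      finally show ?thesis .
    qed
    show ?thesis unfolding bdd_functional_def
      by (intro conjI allI exI[of _ "max K 0"]) (auto simp: sum_sc_def a s bnd)
  qed
  then show "openin (weak_top (sum_sc scA scB) (l1_norm NA NB)) {x \<in> topspace (weak_top (sum_sc scA scB) (l1_norm NA NB)). f (snd x) \<in> U}"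
    using openin_weak[OF _ U] by simp
qed


lemma sw_in1:
  assumes "\<And>x. mulB x 0 = 0" "\<And>x. mulB 0 x = 0" "\<And>b. PB b 0 = 0" "\<And>c. scB c 0 = 0" "NB 0 = 0"
    and "y \<in> sigma_wc scA NA mulA PA"
  shows "(y, 0) \<in> sigma_wc (sum_sc scA scB) (l1_norm NA NB) (sum_mul mulA mulB) (sum_pair PA PB)"
proof -
  have c1: "continuous_map (wstar_top PA) (weak_top scA NA) (\<lambda>c. mulA c y)"
   and c2: "continuous_map (wstar_top PA) (weak_top scA NA) (\<lambda>c. mulA y c)"
    using assms(6) unfolding sigma_wc_def by auto
  have e1: "(\<lambda>c. sum_mul mulA mulB c (y, 0)) = (\<lambda>a. (a, 0)) \<circ> (\<lambda>c. mulA c y) \<circ> fst"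
    by (auto simp: sum_mul_def assms)
  have e2: "(\<lambda>c. sum_mul mulA mulB (y, 0) c) = (\<lambda>a. (a, 0)) \<circ> (\<lambda>c. mulA y c) \<circ> fst"
    by (auto simp: sum_mul_def assms)
  show ?thesis
    using continuous_map_compose[OF continuous_map_compose[OF fst_wstar[of PB PA, OF assms(3)] c1] incl1_weak[where scA=scA and scB=scB and NA=NA and NB=NB, OF assms(4,5)]]
      continuous_map_compose[OF continuous_map_compose[OF fst_wstar[of PB PA, OF assms(3)] c2] incl1_weak[where scA=scA and scB=scB and NA=NA and NB=NB, OF assms(4,5)]]
    by (simp add: sigma_wc_def sum_mul_def comp_def assms)
qed

lemma sw_in2:
  assumes "\<And>x. mulA x 0 = 0" "\<And>x. mulA 0 x = 0" "\<And>b. PA b 0 = 0" "\<And>c. scA c 0 = 0" "NA 0 = 0"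
    and "y \<in> sigma_wc scB NB mulB PB"
  shows "(0, y) \<in> sigma_wc (sum_sc scA scB) (l1_norm NA NB) (sum_mul mulA mulB) (sum_pair PA PB)"
proof -
  have c1: "continuous_map (wstar_top PB) (weak_top scB NB) (\<lambda>c. mulB c y)"
   and c2: "continuous_map (wstar_top PB) (weak_top scB NB) (\<lambda>c. mulB y c)"
    using assms(6) unfolding sigma_wc_def by auto
  have e1: "(\<lambda>c. sum_mul mulA mulB c (0, y)) = (\<lambda>b. (0, b)) \<circ> (\<lambda>c. mulB c y) \<circ> snd"
    by (auto simp: sum_mul_def assms)
  have e2: "(\<lambda>c. sum_mul mulA mulB (0, y) c) = (\<lambda>b. (0, b)) \<circ> (\<lambda>c. mulB y c) \<circ> snd"
    by (auto simp: sum_mul_def assms)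
  show ?thesis
    using continuous_map_compose[OF continuous_map_compose[OF snd_wstar[of PA PB, OF assms(3)] c1] incl2_weak[where scA=scA and scB=scB and NA=NA and NB=NB, OF assms(4,5)]]
      continuous_map_compose[OF continuous_map_compose[OF snd_wstar[of PA PB, OF assms(3)] c2] incl2_weak[where scA=scA and scB=scB and NA=NA and NB=NB, OF assms(4,5)]]
    by (simp add: sigma_wc_def sum_mul_def comp_def assms)
qed

lemma sw_out1:
  assumes "\<And>x. mulB x 0 = 0" "\<And>x. mulB 0 x = 0" "\<And>\<psi>. PB 0 \<psi> = 0" "\<And>y. NB y \<ge> 0"
    and "Y \<in> sigma_wc (sum_sc scA scB) (l1_norm NA NB) (sum_mul mulA mulB) (sum_pair PA PB)" "\<And>y. NA y \<ge> 0"
  shows "fst Y \<in> sigma_wc scA NA mulA PA"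
proof -
  have c1: "continuous_map (wstar_top (sum_pair PA PB)) (weak_top (sum_sc scA scB) (l1_norm NA NB)) (\<lambda>c. sum_mul mulA mulB c Y)"
   and c2: "continuous_map (wstar_top (sum_pair PA PB)) (weak_top (sum_sc scA scB) (l1_norm NA NB)) (\<lambda>c. sum_mul mulA mulB Y c)"
    using assms(5) unfolding sigma_wc_def by auto
  have e1: "(\<lambda>c. mulA c (fst Y)) = fst \<circ> (\<lambda>c. sum_mul mulA mulB c Y) \<circ> (\<lambda>a. (a, 0))"
    by (auto simp: sum_mul_def assms)
  have e2: "(\<lambda>c. mulA (fst Y) c) = fst \<circ> (\<lambda>c. sum_mul mulA mulB Y c) \<circ> (\<lambda>a. (a, 0))"
    by (auto simp: sum_mul_def assms)
  show ?thesis
    using continuous_map_compose[OF continuous_map_compose[OF incl1_wstar[of PB PA, OF assms(3)] c1] fst_weak[OF assms(4) assms(6)]]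
      continuous_map_compose[OF continuous_map_compose[OF incl1_wstar[of PB PA, OF assms(3)] c2] fst_weak[OF assms(4) assms(6)]]
    by (simp add: sigma_wc_def sum_mul_def comp_def assms)
qed

lemma sw_out2:
  assumes "\<And>x. mulA x 0 = 0" "\<And>x. mulA 0 x = 0" "\<And>\<psi>. PA 0 \<psi> = 0" "\<And>y. NA y \<ge> 0"
    and "Y \<in> sigma_wc (sum_sc scA scB) (l1_norm NA NB) (sum_mul mulA mulB) (sum_pair PA PB)" "\<And>y. NB y \<ge> 0"
  shows "snd Y \<in> sigma_wc scB NB mulB PB"
proof -
  have c1: "continuous_map (wstar_top (sum_pair PA PB)) (weak_top (sum_sc scA scB) (l1_norm NA NB)) (\<lambda>c. sum_mul mulA mulB c Y)"
   and c2: "continuous_map (wstar_top (sum_pair PA PB)) (weak_top (sum_sc scA scB) (l1_norm NA NB)) (\<lambda>c. sum_mul mulA mulB Y c)"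
    using assms(5) unfolding sigma_wc_def by auto
  have e1: "(\<lambda>c. mulB c (snd Y)) = snd \<circ> (\<lambda>c. sum_mul mulA mulB c Y) \<circ> (\<lambda>b. (0, b))"
    by (auto simp: sum_mul_def assms)
  have e2: "(\<lambda>c. mulB (snd Y) c) = snd \<circ> (\<lambda>c. sum_mul mulA mulB Y c) \<circ> (\<lambda>b. (0, b))"
    by (auto simp: sum_mul_def assms)
  show ?thesis
    using continuous_map_compose[OF continuous_map_compose[OF incl2_wstar[of PA PB, OF assms(3)] c1] snd_weak[OF assms(4) assms(6)]]
      continuous_map_compose[OF continuous_map_compose[OF incl2_wstar[of PA PB, OF assms(3)] c2] snd_weak[OF assms(4) assms(6)]]
    by (simp add: sigma_wc_def sum_mul_def comp_def assms)
qed


lemma dd_facts: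
  assumes "dual_derivation sc N mul D"
  shows "\<And>x z w. D x (z + w) = D x z + D x w" "\<And>x c z. D x (sc c z) = c * D x z"
    "\<And>x y z. D (x + y) z = D x z + D y z" "\<And>c x z. D (sc c x) z = c * D x z"
    "\<exists>K. \<forall>x z. norm (D x z) \<le> K * N x * N z"
    "\<And>x y z. D (mul x y) z = D x (mul y z) + D y (mul z x)"
    "\<And>x. D x 0 = 0"
proof -
  have b: "\<forall>x. bdd_functional sc N (D x)" using assms unfolding dual_derivation_def by auto
  then show a: "\<And>x z w. D x (z + w) = D x z + D x w" "\<And>x c z. D x (sc c z) = c * D x z"
    unfolding bdd_functional_def by auto
  show "\<And>x y z. D (x + y) z = D x z + D y z" "\<And>c x z. D (sc c x) z = c * D x z"
    "\<exists>K. \<forall>x z. norm (D x z) \<le> K * N x * N z"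
    "\<And>x y z. D (mul x y) z = D x (mul y z) + D y (mul z x)"
    using assms unfolding dual_derivation_def by auto
  show "\<And>x. D x 0 = 0" using a(1) by (metis add_cancel_right_right add_0)
qed

lemma restr1:
  assumes dD: "dual_derivation (sum_sc scA scB) (l1_norm NA NB) (sum_mul mulA mulB) D"
    and "\<And>c. scB c 0 = 0" "NB 0 = 0" "mulB 0 0 = 0"
  shows "dual_derivation scA NA mulA (\<lambda>a z. D (a, 0) (z, 0))"
proof -
  note F = dd_facts[OF dD]
  obtain K where K: "\<And>x z. norm (D x z) \<le> K * l1_norm NA NB x * l1_norm NA NB z" using F(5) by auto
  have "bdd_functional scA NA (\<lambda>z. D (a, 0) (z, 0))" for a
  proof -
    have "D (a, 0) (z + w, 0) = D (a, 0) (z, 0) + D (a, 0) (w, 0)" for z w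
      using F(1)[of "(a,0)" "(z,0)" "(w,0)"] by simp
    moreover have "D (a, 0) (scA c z, 0) = c * D (a, 0) (z, 0)" for c z
      using F(2)[of "(a,0)" c "(z,0)"] by (simp add: sum_sc_def assms)
    moreover have "norm (D (a, 0) (z, 0)) \<le> (K * NA a) * NA z" for z
      using K[of "(a,0)" "(z,0)"] by (simp add: l1_norm_def assms)
    ultimately show ?thesis unfolding bdd_functional_def by blast
  qed
  moreover have "D (x + y, 0) (z, 0) = D (x, 0) (z, 0) + D (y, 0) (z, 0)" for x y z
    using F(3)[of "(x,0)" "(y,0)" "(z,0)"] by simp
  moreover have "D (scA c x, 0) (z, 0) = c * D (x, 0) (z, 0)" for c x z
    using F(4)[of c "(x,0)" "(z,0)"] by (simp add: sum_sc_def assms)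
  moreover have "norm (D (x, 0) (z, 0)) \<le> K * NA x * NA z" for x z
    using K[of "(x,0)" "(z,0)"] by (simp add: l1_norm_def assms)
  moreover have "D (mulA x y, 0) (z, 0) = D (x, 0) (mulA y z, 0) + D (y, 0) (mulA z x, 0)" for x y z
    using F(6)[of "(x,0)" "(y,0)" "(z,0)"] by (simp add: sum_mul_def assms)
  ultimately show ?thesis unfolding dual_derivation_def by blast
qed

lemma restr2:
  assumes dD: "dual_derivation (sum_sc scA scB) (l1_norm NA NB) (sum_mul mulA mulB) D"
    and "\<And>c. scA c 0 = 0" "NA 0 = 0" "mulA 0 0 = 0"
  shows "dual_derivation scB NB mulB (\<lambda>a z. D (0, a) (0, z))"
proof -
  note F = dd_facts[OF dD]
  obtain K where K: "\<And>x z. norm (D x z) \<le> K * l1_norm NA NB x * l1_norm NA NB z" using F(5) by auto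
  have "bdd_functional scB NB (\<lambda>z. D (0, a) (0, z))" for a
  proof -
    have "D (0, a) (0, z + w) = D (0, a) (0, z) + D (0, a) (0, w)" for z w
      using F(1)[of "(0,a)" "(0,z)" "(0,w)"] by simp
    moreover have "D (0, a) (0, scB c z) = c * D (0, a) (0, z)" for c z
      using F(2)[of "(0,a)" c "(0,z)"] by (simp add: sum_sc_def assms)
    moreover have "norm (D (0, a) (0, z)) \<le> (K * NB a) * NB z" for z
      using K[of "(0,a)" "(0,z)"] by (simp add: l1_norm_def assms)
    ultimately show ?thesis unfolding bdd_functional_def by blast
  qed
  moreover have "D (0, x + y) (0, z) = D (0, x) (0, z) + D (0, y) (0, z)" for x y z
    using F(3)[of "(0,x)" "(0,y)" "(0,z)"] by simp
  moreover have "D (0, scB c x) (0, z) = c * D (0, x) (0, z)" for c x z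
    using F(4)[of c "(0,x)" "(0,z)"] by (simp add: sum_sc_def assms)
  moreover have "norm (D (0, x) (0, z)) \<le> K * NB x * NB z" for x z
    using K[of "(0,x)" "(0,z)"] by (simp add: l1_norm_def assms)
  moreover have "D (0, mulB x y) (0, z) = D (0, x) (0, mulB y z) + D (0, y) (0, mulB z x)" for x y z
    using F(6)[of "(0,x)" "(0,y)" "(0,z)"] by (simp add: sum_mul_def assms)
  ultimately show ?thesis unfolding dual_derivation_def by blast
qed

lemma vanish_dense:
  fixes h :: "'a::ab_group_add \<Rightarrow> 'k::real_normed_field"
  assumes vs: "vector_space sc" and dense: "sq_wstar_dense sc mul P"
    and cont: "continuous_map (wstar_top P) euclidean h"
    and add: "\<And>x y. h (x + y) = h x + h y" and scl: "\<And>c x. h (sc c x) = c * h x"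
    and prod: "\<And>x y. h (mul x y) = 0"
  shows "h a = 0"
proof -
  have md: "module sc" using vs module_iff_vector_space by blast
  have h0: "h 0 = 0" using add by (metis add_cancel_right_right add_0)
  have sp: "module.span sc {mul a b | a b. True} \<subseteq> {a. h a = 0}"
  proof
    fix x assume "x \<in> module.span sc {mul a b | a b. True}"
    then have "h x = 0"
      by (rule module.span_induct_alt[OF md, where h="\<lambda>x. h x = 0"]) (auto simp: h0 add scl prod)
    then show "x \<in> {a. h a = 0}" by simp
  qed
  have "closedin (wstar_top P) {x \<in> topspace (wstar_top P). h x \<in> {0}}"
    by (rule closedin_continuous_map_preimage[OF cont]) (simp add: closed_closedin[symmetric])
  then have cl: "closedin (wstar_top P) {a. h a = 0}" by simp
  have "(wstar_top P) closure_of (module.span sc {mul a b | a b. True}) \<subseteq> {a. h a = 0}"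
    by (rule closure_of_minimal[OF sp cl])
  then show ?thesis using dense unfolding sq_wstar_dense_def by auto
qed


theorem theorem3p15:
  fixes scA :: "'k::{real_normed_field,banach} \<Rightarrow> 'a::ab_group_add \<Rightarrow> 'a"
    and NA :: "'a \<Rightarrow> real" and mulA :: "'a \<Rightarrow> 'a \<Rightarrow> 'a"
    and scAp :: "'k \<Rightarrow> 'p::ab_group_add \<Rightarrow> 'p" and NAp :: "'p \<Rightarrow> real" and PA :: "'a \<Rightarrow> 'p \<Rightarrow> 'k"
    and scB :: "'k \<Rightarrow> 'b::ab_group_add \<Rightarrow> 'b"
    and NB :: "'b \<Rightarrow> real" and mulB :: "'b \<Rightarrow> 'b \<Rightarrow> 'b"
    and scBp :: "'k \<Rightarrow> 'q::ab_group_add \<Rightarrow> 'q" and NBp :: "'q \<Rightarrow> real" and PB :: "'b \<Rightarrow> 'q \<Rightarrow> 'k"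
  assumes "dual_banach_algebra scA NA mulA scAp NAp PA"
    and "dual_banach_algebra scB NB mulB scBp NBp PB"
    and "weakly_connes_amenable scA NA mulA PA"
    and "weakly_connes_amenable scB NB mulB PB"
    and "sq_wstar_dense scA mulA PA"
    and "sq_wstar_dense scB mulB PB"
  shows "weakly_connes_amenable (sum_sc scA scB) (l1_norm NA NB) (sum_mul mulA mulB) (sum_pair PA PB)"
  unfolding weakly_connes_amenable_def
proof (intro allI impI, elim conjE)
  note A = dba_facts[OF assms(1)] and B = dba_facts[OF assms(2)]
  let ?S = "sigma_wc (sum_sc scA scB) (l1_norm NA NB) (sum_mul mulA mulB) (sum_pair PA PB)"
  let ?SA = "sigma_wc scA NA mulA PA" and ?SB = "sigma_wc scB NB mulB PB"
  fix D assume dD: "dual_derivation (sum_sc scA scB) (l1_norm NA NB) (sum_mul mulA mulB) D"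
    and cD: "\<forall>y\<in>?S. continuous_map (wstar_top (sum_pair PA PB)) euclidean (\<lambda>c. D c y)"
  note F = dd_facts[OF dD]
  have inA: "y \<in> ?SA \<Longrightarrow> (y, 0) \<in> ?S" for y by (rule sw_in1) (auto simp: A B)
  have inB: "y \<in> ?SB \<Longrightarrow> (0, y) \<in> ?S" for y by (rule sw_in2) (auto simp: A B)
  have outA: "Y \<in> ?S \<Longrightarrow> fst Y \<in> ?SA" for Y by (rule sw_out1) (auto simp: A B)
  have outB: "Y \<in> ?S \<Longrightarrow> snd Y \<in> ?SB" for Y by (rule sw_out2) (auto simp: A B)
  have cross1: "D (a, 0) (0, b) = 0" if "(0, b) \<in> ?S" for a b
  proof (rule vanish_dense[OF A(1) assms(5), where h = "\<lambda>a. D (a, 0) (0, b)"])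
    show "continuous_map (wstar_top PA) euclidean (\<lambda>a. D (a, 0) (0, b))"
      using continuous_map_compose[OF incl1_wstar[of PB PA] cD[rule_format, OF that]] B
      by (simp add: o_def)
    show "D (x + y, 0) (0, b) = D (x, 0) (0, b) + D (y, 0) (0, b)" for x y
      using F(3)[of "(x,0)" "(y,0)"] by simp
    show "D (scA c x, 0) (0, b) = c * D (x, 0) (0, b)" for c x
      using F(4)[of c "(x,0)"] by (simp add: sum_sc_def B)
    show "D (mulA x y, 0) (0, b) = 0" for x y
      using F(6)[of "(x,0)" "(y,0)" "(0,b)"] F(7) by (simp add: sum_mul_def A B zero_prod_def)
  qed
  have cross2: "D (0, b) (a, 0) = 0" if "(a, 0) \<in> ?S" for a b
  proof (rule vanish_dense[OF B(1) assms(6), where h = "\<lambda>b. D (0, b) (a, 0)"])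
    show "continuous_map (wstar_top PB) euclidean (\<lambda>b. D (0, b) (a, 0))"
      using continuous_map_compose[OF incl2_wstar[of PA PB] cD[rule_format, OF that]] A
      by (simp add: o_def)
    show "D (0, x + y) (a, 0) = D (0, x) (a, 0) + D (0, y) (a, 0)" for x y
      using F(3)[of "(0,x)" "(0,y)"] by simp
    show "D (0, scB c x) (a, 0) = c * D (0, x) (a, 0)" for c x
      using F(4)[of c "(0,x)"] by (simp add: sum_sc_def A)
    show "D (0, mulB x y) (a, 0) = 0" for x y
      using F(6)[of "(0,x)" "(0,y)" "(a,0)"] F(7) by (simp add: sum_mul_def A B zero_prod_def)
  qed
  have dA: "dual_derivation scA NA mulA (\<lambda>a z. D (a, 0) (z, 0))" by (rule restr1[OF dD]) (auto simp: B)
  have dB: "dual_derivation scB NB mulB (\<lambda>a z. D (0, a) (0, z))" by (rule restr2[OF dD]) (auto simp: A)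
  have cA: "\<forall>y\<in>?SA. continuous_map (wstar_top PA) euclidean (\<lambda>c. D (c, 0) (y, 0))"
  proof
    fix y assume "y \<in> ?SA"
    then show "continuous_map (wstar_top PA) euclidean (\<lambda>c. D (c, 0) (y, 0))"
      using continuous_map_compose[OF incl1_wstar[of PB PA] cD[rule_format, OF inA]] B
      by (simp add: o_def)
  qed
  have cB: "\<forall>y\<in>?SB. continuous_map (wstar_top PB) euclidean (\<lambda>c. D (0, c) (0, y))"
  proof
    fix y assume "y \<in> ?SB"
    then show "continuous_map (wstar_top PB) euclidean (\<lambda>c. D (0, c) (0, y))"
      using continuous_map_compose[OF incl2_wstar[of PA PB] cD[rule_format, OF inB]] A
      by (simp add: o_def)
  qed
  obtain fA where fA1: "\<forall>x\<in>?SA. \<forall>y\<in>?SA. fA (x + y) = fA x + fA y"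
    and fA2: "\<forall>c. \<forall>x\<in>?SA. fA (scA c x) = c * fA x"
    and fA3: "\<exists>K. \<forall>x\<in>?SA. norm (fA x) \<le> K * NA x"
    and fA4: "\<forall>c. \<forall>y\<in>?SA. D (c, 0) (y, 0) = fA (mulA y c) - fA (mulA c y)"
    using assms(3) dA cA unfolding weakly_connes_amenable_def by blast
  obtain fB where fB1: "\<forall>x\<in>?SB. \<forall>y\<in>?SB. fB (x + y) = fB x + fB y"
    and fB2: "\<forall>c. \<forall>x\<in>?SB. fB (scB c x) = c * fB x"
    and fB3: "\<exists>K. \<forall>x\<in>?SB. norm (fB x) \<le> K * NB x"
    and fB4: "\<forall>c. \<forall>y\<in>?SB. D (0, c) (0, y) = fB (mulB y c) - fB (mulB c y)"
    using assms(4) dB cB unfolding weakly_connes_amenable_def by blast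
  obtain KA where KA: "\<forall>x\<in>?SA. norm (fA x) \<le> KA * NA x" using fA3 by blast
  obtain KB where KB: "\<forall>x\<in>?SB. norm (fB x) \<le> KB * NB x" using fB3 by blast
  define f where "f X = fA (fst X) + fB (snd X)" for X
  show "\<exists>f. (\<forall>x\<in>?S. \<forall>y\<in>?S. f (x + y) = f x + f y)
             \<and> (\<forall>c. \<forall>x\<in>?S. f (sum_sc scA scB c x) = c * f x)
             \<and> (\<exists>K. \<forall>x\<in>?S. norm (f x) \<le> K * l1_norm NA NB x)
             \<and> (\<forall>c. \<forall>y\<in>?S. D c y = f (sum_mul mulA mulB y c) - f (sum_mul mulA mulB c y))"
  proof (intro exI[of _ f] conjI ballI allI)
    fix x y assume "x \<in> ?S" "y \<in> ?S"
    then show "f (x + y) = f x + f y" unfolding f_def using fA1 fB1 outA outB by (simp add: algebra_simps)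
  next
    fix c x assume "x \<in> ?S"
    then show "f (sum_sc scA scB c x) = c * f x" unfolding f_def using fA2 fB2 outA outB
      by (simp add: sum_sc_def algebra_simps)
  next
    show "\<exists>K. \<forall>x\<in>?S. norm (f x) \<le> K * l1_norm NA NB x"
    proof (intro exI[of _ "max (max KA KB) 0"] ballI)
      fix x assume x: "x \<in> ?S"
      have "norm (f x) \<le> norm (fA (fst x)) + norm (fB (snd x))" unfolding f_def by (rule norm_triangle_ineq)
      also have "\<dots> \<le> KA * NA (fst x) + KB * NB (snd x)" using KA KB outA[OF x] outB[OF x] by (meson add_mono)
      also have "\<dots> \<le> max (max KA KB) 0 * NA (fst x) + max (max KA KB) 0 * NB (snd x)"
        by (intro add_mono mult_right_mono) (auto simp: A B)
      finally show "norm (f x) \<le> max (max KA KB) 0 * l1_norm NA NB x" by (simp add: l1_norm_def algebra_simps)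
    qed
  next
    fix c :: "'a \<times> 'b" and Y assume Y: "Y \<in> ?S"
    obtain c1 c2 where c: "c = (c1, c2)" by (cases c)
    obtain y1 y2 where y: "Y = (y1, y2)" by (cases Y)
    have y1: "y1 \<in> ?SA" using outA[OF Y] y by simp
    have y2: "y2 \<in> ?SB" using outB[OF Y] y by simp
    have "D c Y = D ((c1, 0) + (0, c2)) ((y1, 0) + (0, y2))" by (simp add: c y)
    also have "\<dots> = D (c1, 0) (y1, 0) + D (c1, 0) (0, y2) + (D (0, c2) (y1, 0) + D (0, c2) (0, y2))"
      by (simp only: F(1) F(3)) (simp add: add_ac)
    also have "\<dots> = D (c1, 0) (y1, 0) + D (0, c2) (0, y2)"
      using cross1[OF inB[OF y2]] cross2[OF inA[OF y1]] by simp
    also have "\<dots> = f (sum_mul mulA mulB Y c) - f (sum_mul mulA mulB c Y)"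
      using fA4 fB4 y1 y2 by (simp add: f_def sum_mul_def c y)
    finally show "D c Y = f (sum_mul mulA mulB Y c) - f (sum_mul mulA mulB c Y)" .
  qed
qed

end
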